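(* Let $K\subset\mathbb{R}^d$ be nonempty, closed, convex with $\mathrm{B}_d(0)\subseteq K\subseteq R\,\mathrm{B}_d(0)$, let $f$ be convex and $L$-Lipschitz on $K$ ($L>0$), let $a>0$, $\eta>0$, and $Q=\{(x,t):x\in K,\ f(x)\le at\}\subset\mathbb{R}^{d+1}$. Then for any $\tau>0$, $$\int_{\mathbb{R}^{d+1}}e^{-at}\exp\Big(-\frac{(\mathrm{dist}(w,Q)-\tau)^2}{2\eta}\Big)\,dw\le Z_Q\,e^{\tau C_L}\Big[C_L\sqrt{2\pi\eta}\exp\Big(\frac{\eta C_L^2}2\Big)+1\Big],$$ where $w=(x,t)$, $Z_Q=\int_Qe^{-at}\,dx\,dt$ and $C_L=\sqrt{a^2+L^2}+LR+d$.
   Context: $\mathrm{dist}(w,Q)=\inf_{z\in Q}\|w-z\|$. *)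

theory Defs
  imports "HOL-Analysis.Analysis"
begin

end

theory Submission
  imports Defs "HOL-Probability.Probability" "HOL-Real_Asymp.Real_Asymp"
begin


lemma cs2: fixes L a p q :: real
  shows "L * p + a * q \<le> sqrt (a\<^sup>2 + L\<^sup>2) * sqrt (p\<^sup>2 + q\<^sup>2)"
proof -
  have "(L * p + a * q)\<^sup>2 \<le> (a\<^sup>2 + L\<^sup>2) * (p\<^sup>2 + q\<^sup>2)"
  proof -
    have "0 \<le> (L*q - a*p)\<^sup>2" by simp
    thus ?thesis by (simp add: power2_eq_square algebra_simps)
  qed
  hence "L * p + a * q \<le> sqrt ((a\<^sup>2 + L\<^sup>2) * (p\<^sup>2 + q\<^sup>2))"
    by (rule real_le_rsqrt)
  thus ?thesis by (simp add: real_sqrt_mult)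
qed

lemma geom:
  fixes K :: "(real ^ 'd) set" and f :: "real ^ 'd \<Rightarrow> real"
  assumes "convex K" "cball 0 1 \<subseteq> K" "K \<subseteq> cball 0 R"
    and "L-lipschitz_on K f" and "a > 0" and "s \<ge> 0"
    and y: "y \<in> K" "f y \<le> a * \<sigma>" and d: "dist (x, t) (y, \<sigma>) \<le> s"
  shows "(1 / (1 + s)) *\<^sub>R x \<in> K \<and> f ((1 / (1 + s)) *\<^sub>R x) \<le> a * (t + (sqrt (a\<^sup>2 + L\<^sup>2) + L * R) * s / a)"
proof -
  let ?x = "(1 / (1 + s)) *\<^sub>R x"
  have L0: "L \<ge> 0" using assms(4) lipschitz_on_nonneg by blast
  have nyR: "norm y \<le> R" using y assms(3) by auto
  have sq: "sqrt ((dist x y)\<^sup>2 + (dist t \<sigma>)\<^sup>2) \<le> s" using d by (simp add: dist_Pair_Pair)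
  have dxy: "dist x y \<le> s"
    by (metis sq order_trans real_sqrt_sum_squares_ge1)
  have xK: "?x \<in> K"
  proof (cases "s = 0")
    case True
    then have "x = y" using dxy by simp
    then show ?thesis using True y by simp
  next
    case False
    then have sp: "s > 0" using assms(6) by simp
    define z where "z = (1 / s) *\<^sub>R (x - y)"
    have "norm z \<le> 1" using dxy sp by (simp add: z_def dist_norm divide_le_eq_1)
    then have zK: "z \<in> K" using assms(2) by auto
    have eq: "?x = (1 - s / (1 + s)) *\<^sub>R y + (s / (1 + s)) *\<^sub>R z"
      using sp by (simp add: z_def algebra_simps field_simps scaleR_diff_right)
    show ?thesis unfolding eq
      by (rule convexD[OF assms(1) y(1) zK]) (use sp in auto)
  qed
  have yy: "(1 / (1 + s)) *\<^sub>R y + (s / (1 + s)) *\<^sub>R y = y"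
  proof -
    have "(1 / (1 + s)) *\<^sub>R y + (s / (1 + s)) *\<^sub>R y = ((1 / (1 + s)) + (s / (1 + s))) *\<^sub>R y"
      by (simp add: scaleR_left_distrib)
    also have "(1 / (1 + s)) + (s / (1 + s)) = 1" using assms(6) by (simp add: field_simps)
    finally show ?thesis by simp
  qed
  have "dist ?x y = norm ((1 / (1 + s)) *\<^sub>R ((x - y) - s *\<^sub>R y))"
    using assms(6) by (simp add: dist_norm algebra_simps yy)
  also have "\<dots> = (1 / (1 + s)) * norm ((x - y) - s *\<^sub>R y)" using assms(6) by simp
  also have "\<dots> \<le> norm ((x - y) - s *\<^sub>R y)"
    using assms(6) mult_left_mono[of 1 "1+s" "norm ((x - y) - s *\<^sub>R y)"] by (simp add: divide_le_eq)
  also have "\<dots> \<le> norm (x - y) + s * norm y"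
    using norm_triangle_ineq4[of "x - y" "s *\<^sub>R y"] assms(6) by simp
  also have "\<dots> \<le> dist x y + s * R" using nyR assms(6) by (simp add: dist_norm mult_left_mono)
  finally have dx: "dist ?x y \<le> dist x y + s * R" .
  have "f ?x \<le> f y + L * dist ?x y"
    using lipschitz_onD[OF assms(4) xK y(1)] by (simp add: dist_real_def)
  also have "\<dots> \<le> f y + L * dist x y + L * R * s"
    using mult_left_mono[OF dx L0] by (simp add: algebra_simps)
  finally have f1: "f ?x \<le> f y + L * dist x y + L * R * s" .
  have "L * dist x y + a * dist t \<sigma> \<le> sqrt (a\<^sup>2 + L\<^sup>2) * s"
    using cs2[of L "dist x y" a "dist t \<sigma>"] mult_left_mono[OF sq, of "sqrt (a\<^sup>2 + L\<^sup>2)"] by simp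
  moreover have "a * \<sigma> \<le> a * t + a * dist t \<sigma>"
    using assms(5) by (simp add: dist_real_def) (smt (verit) mult_left_mono abs_ge_self abs_minus_commute distrib_left)
  ultimately have "f ?x \<le> a * t + (sqrt (a\<^sup>2 + L\<^sup>2) + L * R) * s"
    using f1 y(2) by (simp add: algebra_simps)
  moreover have "a * (t + (sqrt (a\<^sup>2 + L\<^sup>2) + L * R) * s / a) = a * t + (sqrt (a\<^sup>2 + L\<^sup>2) + L * R) * s"
    using assms(5) by (simp add: field_simps)
  ultimately show ?thesis using xK by simp
qed


lemma scale_int:
  fixes \<phi> :: "'a::euclidean_space \<Rightarrow> ennreal"
  assumes [measurable]: "\<phi> \<in> borel_measurable borel" and c: "c > 0"
  shows "(\<integral>\<^sup>+x. \<phi> ((1 / c) *\<^sub>R x) \<partial>lborel) = ennreal (c ^ DIM('a)) * (\<integral>\<^sup>+x. \<phi> x \<partial>lborel)"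
proof -
  have "(\<integral>\<^sup>+x. \<phi> ((1 / c) *\<^sub>R x) \<partial>lborel) =
    (\<integral>\<^sup>+x. \<phi> ((1 / c) *\<^sub>R x) \<partial>density (distr lborel borel (\<lambda>x. 0 + c *\<^sub>R x)) (\<lambda>_. \<bar>c\<bar>^DIM('a)))"
  proof -
    have eq: "(lborel::'a measure) = density (distr lborel borel (\<lambda>x. 0 + c *\<^sub>R x)) (\<lambda>_. \<bar>c\<bar>^DIM('a))"
      by (rule lborel_affine) (use c in simp)
    show ?thesis by (rule arg_cong[OF eq, where f="\<lambda>M. \<integral>\<^sup>+x. \<phi> ((1 / c) *\<^sub>R x) \<partial>M"])
  qed
  also have "\<dots> = (\<integral>\<^sup>+x. ennreal (\<bar>c\<bar>^DIM('a)) * \<phi> ((1 / c) *\<^sub>R (0 + c *\<^sub>R x)) \<partial>lborel)"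
    by (simp add: nn_integral_density nn_integral_distr)
  also have "\<dots> = (\<integral>\<^sup>+x. ennreal (c^DIM('a)) * \<phi> x \<partial>lborel)"
    using c by simp
  also have "\<dots> = ennreal (c ^ DIM('a)) * (\<integral>\<^sup>+x. \<phi> x \<partial>lborel)"
    by (simp add: nn_integral_cmult)
  finally show ?thesis .
qed

lemma cov:
  fixes G :: "((real ^ 'd::finite) \<times> real) \<Rightarrow> ennreal"
  assumes [measurable]: "G \<in> borel_measurable borel" and c: "c > 0"
  shows "(\<integral>\<^sup>+w. G ((1 / c) *\<^sub>R fst w, snd w + b) \<partial>lborel) = ennreal (c ^ CARD('d)) * (\<integral>\<^sup>+w. G w \<partial>lborel)"
proof -
  have Gm2[measurable]: "G \<in> borel_measurable (lborel \<Otimes>\<^sub>M lborel)"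
    using assms(1) by (simp add: lborel_prod)
  define \<phi> where "\<phi> x = (\<integral>\<^sup>+t. G (x, t) \<partial>lborel)" for x :: "real ^ 'd"
  have [measurable]: "\<phi> \<in> borel_measurable borel"
    unfolding \<phi>_def using lborel.borel_measurable_nn_integral_fst[OF Gm2] by simp
  have "(\<integral>\<^sup>+w. G ((1 / c) *\<^sub>R fst w, snd w + b) \<partial>lborel)
      = (\<integral>\<^sup>+w. G ((1 / c) *\<^sub>R fst w, snd w + b) \<partial>(lborel \<Otimes>\<^sub>M lborel))"
    by (simp add: lborel_prod)
  also have "\<dots> = (\<integral>\<^sup>+x. \<integral>\<^sup>+t. G ((1 / c) *\<^sub>R x, t + b) \<partial>lborel \<partial>lborel)"
    by (subst lborel.nn_integral_fst[symmetric]) simp_all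
  also have "\<dots> = (\<integral>\<^sup>+x. \<phi> ((1 / c) *\<^sub>R x) \<partial>lborel)"
  proof (rule nn_integral_cong)
    fix x :: "real ^ 'd"
    show "(\<integral>\<^sup>+t. G ((1 / c) *\<^sub>R x, t + b) \<partial>lborel) = \<phi> ((1 / c) *\<^sub>R x)"
      unfolding \<phi>_def
      using nn_integral_real_affine[of "\<lambda>t. G ((1 / c) *\<^sub>R x, t)" 1 b] by (simp add: add.commute)
  qed
  also have "\<dots> = ennreal (c ^ CARD('d)) * (\<integral>\<^sup>+x. \<phi> x \<partial>lborel)"
    using scale_int[of \<phi> c] c by simp
  also have "(\<integral>\<^sup>+x. \<phi> x \<partial>lborel) = (\<integral>\<^sup>+w. G w \<partial>lborel)"
    unfolding \<phi>_def by (subst lborel.nn_integral_fst) (simp_all add: lborel_prod)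
  finally show ?thesis .
qed


lemma Q_closed:
  fixes K :: "(real ^ 'd) set" and f :: "real ^ 'd \<Rightarrow> real"
  assumes "closed K" "L-lipschitz_on K f"
  shows "closed {(x, t). x \<in> K \<and> f x \<le> a * t}"
proof -
  have fc: "continuous_on K f" using assms(2) by (rule lipschitz_on_continuous_on)
  have c1: "continuous_on (K \<times> UNIV) (\<lambda>p. f (fst p))"
    by (rule continuous_on_compose2[OF fc continuous_on_fst]) auto
  have c: "continuous_on (K \<times> UNIV) (\<lambda>p. f (fst p) - a * snd p)"
    by (intro continuous_intros c1)
  have "closed ((K \<times> UNIV) \<inter> (\<lambda>p. f (fst p) - a * snd p) -` {..0})"
    by (rule continuous_closed_preimage[OF c]) (auto intro: closed_Times assms(1))
  moreover have "(K \<times> UNIV) \<inter> (\<lambda>p. f (fst p) - a * snd p) -` {..0} = {(x, t). x \<in> K \<and> f x \<le> a * t}"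
    by auto
  ultimately show ?thesis by simp
qed

lemma growth:
  fixes K :: "(real ^ 'd) set" and f :: "real ^ 'd \<Rightarrow> real"
    and R L a s :: real
  assumes "K \<noteq> {}" and "closed K" and "convex K"
    and "cball 0 1 \<subseteq> K" and "K \<subseteq> cball 0 R"
    and "L-lipschitz_on K f" 
    and "a > 0" and "s \<ge> 0"
  defines "Q \<equiv> {(x, t). x \<in> K \<and> f x \<le> a * t}"
    and "D \<equiv> sqrt (a\<^sup>2 + L\<^sup>2) + L * R"
  shows "(\<integral>\<^sup>+w. ennreal (exp (- a * snd w)) * indicator {w. infdist w Q \<le> s} w \<partial>lborel)
     \<le> ennreal (exp (s * (D + real CARD('d)))) * (\<integral>\<^sup>+ w. ennreal (exp (- a * snd w)) * indicator Q w \<partial>lborel)"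
proof -
  have Qc: "closed Q" unfolding Q_def by (rule Q_closed[OF assms(2,6)])
  obtain x0 where x0: "x0 \<in> K" using assms(1) by blast
  have Qne: "Q \<noteq> {}" using x0 assms(7) unfolding Q_def
    by (auto intro!: exI[of _ "f x0 / a"])
  have QB[measurable]: "Q \<in> sets borel" using Qc by (rule borel_closed)
  define G where "G w = ennreal (exp (- a * snd w)) * indicator Q w" for w :: "(real ^ 'd) \<times> real"
  have em[measurable]: "(\<lambda>w::(real ^ 'd) \<times> real. exp (- a * snd w)) \<in> borel_measurable borel"
    by (intro borel_measurable_continuous_onI continuous_intros)
  have Gm[measurable]: "G \<in> borel_measurable borel" unfolding G_def
    by (intro borel_measurable_times_ennreal measurable_compose[OF em] borel_measurable_indicator QB) simp
  define T where "T w = ((1 / (1 + s)) *\<^sub>R fst w, snd w + D * s / a)" for w :: "(real ^ 'd) \<times> real"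
  have pw: "ennreal (exp (- a * snd w)) * indicator {w. infdist w Q \<le> s} w \<le> ennreal (exp (D * s)) * G (T w)" for w
  proof (cases "infdist w Q \<le> s")
    case True
    obtain q where q: "q \<in> Q" "infdist w Q = dist w q" using infdist_attains_inf[OF Qc Qne] by blast
    obtain x t where w: "w = (x, t)" by (cases w)
    obtain y \<sigma> where qq: "q = (y, \<sigma>)" by (cases q)
    have "(1 / (1 + s)) *\<^sub>R x \<in> K \<and> f ((1 / (1 + s)) *\<^sub>R x) \<le> a * (t + D * s / a)"
      using geom[OF assms(3,4,5,6,7,8), of y \<sigma> x t] q True unfolding w qq Q_def D_def by auto
    then have TQ: "T w \<in> Q" unfolding T_def w Q_def by simp
    have "exp (- a * snd w) = exp (D * s) * exp (- a * snd (T w))"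
      using assms(7) by (simp add: T_def exp_add[symmetric] algebra_simps)
    then show ?thesis using True TQ by (simp add: G_def ennreal_mult)
  next
    case False
    then show ?thesis by simp
  qed
  have "(\<integral>\<^sup>+w. ennreal (exp (- a * snd w)) * indicator {w. infdist w Q \<le> s} w \<partial>lborel)
     \<le> (\<integral>\<^sup>+w. ennreal (exp (D * s)) * G (T w) \<partial>lborel)"
    by (rule nn_integral_mono) (rule pw)
  also have "\<dots> = ennreal (exp (D * s)) * (\<integral>\<^sup>+w. G (T w) \<partial>lborel)"
  proof -
    have Tm: "T \<in> borel_measurable borel" unfolding T_def
      by (intro borel_measurable_continuous_onI continuous_intros)
    show ?thesis by (rule nn_integral_cmult) (use measurable_compose[OF Tm Gm] in simp)
  qed
  also have "(\<integral>\<^sup>+w. G (T w) \<partial>lborel) = ennreal ((1 + s) ^ CARD('d)) * (\<integral>\<^sup>+w. G w \<partial>lborel)"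
    unfolding T_def by (rule cov[OF Gm]) (use assms(8) in simp)
  also have "ennreal (exp (D * s)) * (ennreal ((1 + s) ^ CARD('d)) * (\<integral>\<^sup>+w. G w \<partial>lborel))
      \<le> ennreal (exp (s * (D + real CARD('d)))) * (\<integral>\<^sup>+w. G w \<partial>lborel)"
  proof -
    have "(1 + s) ^ CARD('d) \<le> exp s ^ CARD('d)"
      using assms(8) by (intro power_mono) (auto simp: add.commute exp_ge_add_one_self_aux)
    also have "\<dots> = exp (s * real CARD('d))" by (simp add: exp_of_nat_mult[symmetric] mult.commute)
    finally have pe: "(1 + s) ^ CARD('d) \<le> exp (s * real CARD('d))" .
    have "exp (D * s) * (1 + s) ^ CARD('d) \<le> exp (s * (D + real CARD('d)))"
      using mult_left_mono[OF pe, of "exp (D * s)"]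
      by (simp add: exp_add algebra_simps)
    then have "ennreal (exp (D * s)) * ennreal ((1 + s) ^ CARD('d)) \<le> ennreal (exp (s * (D + real CARD('d))))"
      using assms(8) by (simp add: ennreal_mult[symmetric])
    then show ?thesis by (simp add: mult.assoc[symmetric] mult_right_mono)
  qed
  finally show ?thesis unfolding G_def .
qed


lemma tail:
  fixes \<tau> \<eta> b :: real
  assumes "\<eta> > 0" "\<tau> \<le> b"
  shows "(\<integral>\<^sup>+s. ennreal ((s - \<tau>) / \<eta> * exp (- (s - \<tau>)\<^sup>2 / (2 * \<eta>))) * indicator {b..} s \<partial>lborel)
     = ennreal (exp (- (b - \<tau>)\<^sup>2 / (2 * \<eta>)))"
proof -
  have lim: "((\<lambda>x. - exp (- (x - \<tau>)\<^sup>2 / (2 * \<eta>))) \<longlongrightarrow> 0) at_top"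
    using assms(1) by real_asymp
  have "(\<integral>\<^sup>+s. ennreal ((s - \<tau>) / \<eta> * exp (- (s - \<tau>)\<^sup>2 / (2 * \<eta>))) * indicator {b..} s \<partial>lborel)
     = 0 - (- exp (- (b - \<tau>)\<^sup>2 / (2 * \<eta>)))"
  proof (rule nn_integral_FTC_atLeast[OF _ _ _ lim])
    show "(\<lambda>s. (s - \<tau>) / \<eta> * exp (- (s - \<tau>)\<^sup>2 / (2 * \<eta>))) \<in> borel_measurable borel"
      by (intro borel_measurable_continuous_onI continuous_intros) (use assms(1) in auto)
    fix x assume "b \<le> x"
    then show "0 \<le> (x - \<tau>) / \<eta> * exp (- (x - \<tau>)\<^sup>2 / (2 * \<eta>))" using assms by simp
  next
    fix x
    show "((\<lambda>x. - exp (- (x - \<tau>)\<^sup>2 / (2 * \<eta>))) has_real_derivative (x - \<tau>) / \<eta> * exp (- (x - \<tau>)\<^sup>2 / (2 * \<eta>))) (at x)"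
      using assms(1) by (auto intro!: derivative_eq_intros simp: field_simps power2_eq_square)
  qed
  then show ?thesis by simp
qed


lemma gauss:
  fixes \<tau> \<eta> C :: real
  assumes "\<eta> > 0"
  shows "(\<integral>\<^sup>+u. ennreal (exp (C * u) * exp (- (u - \<tau>)\<^sup>2 / (2 * \<eta>))) \<partial>lborel)
     = ennreal (exp (C * \<tau> + \<eta> * C\<^sup>2 / 2) * sqrt (2 * pi * \<eta>))"
proof -
  define m where "m = \<tau> + \<eta> * C"
  have eq: "exp (C * u) * exp (- (u - \<tau>)\<^sup>2 / (2 * \<eta>))
     = (exp (C * \<tau> + \<eta> * C\<^sup>2 / 2) * sqrt (2 * pi * \<eta>)) * normal_density m (sqrt \<eta>) u" for u
  proof -
    have e: "C * u + - (u - \<tau>)\<^sup>2 / (2 * \<eta>) = (C * \<tau> + \<eta> * C\<^sup>2 / 2) + - (u - m)\<^sup>2 / (2 * \<eta>)"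
      using assms by (simp add: m_def field_simps power2_eq_square)
    have "exp (C * u) * exp (- (u - \<tau>)\<^sup>2 / (2 * \<eta>)) = exp (C * \<tau> + \<eta> * C\<^sup>2 / 2) * exp (- (u - m)\<^sup>2 / (2 * \<eta>))"
      by (simp only: exp_add[symmetric] e)
    moreover have "sqrt (2 * pi * \<eta>) * normal_density m (sqrt \<eta>) u = exp (- (u - m)\<^sup>2 / (2 * \<eta>))"
      using assms by (simp add: normal_density_def)
    ultimately show ?thesis by (simp add: mult.assoc)
  qed
  have "(\<integral>\<^sup>+u. ennreal (exp (C * u) * exp (- (u - \<tau>)\<^sup>2 / (2 * \<eta>))) \<partial>lborel)
     = (\<integral>\<^sup>+u. ennreal (exp (C * \<tau> + \<eta> * C\<^sup>2 / 2) * sqrt (2 * pi * \<eta>)) * ennreal (normal_density m (sqrt \<eta>) u) \<partial>lborel)"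
  proof (rule nn_integral_cong)
    fix u :: real
    show "ennreal (exp (C * u) * exp (- (u - \<tau>)\<^sup>2 / (2 * \<eta>))) = ennreal (exp (C * \<tau> + \<eta> * C\<^sup>2 / 2) * sqrt (2 * pi * \<eta>)) * ennreal (normal_density m (sqrt \<eta>) u)"
      unfolding eq using assms by (subst ennreal_mult) auto
  qed
  also have "\<dots> = ennreal (exp (C * \<tau> + \<eta> * C\<^sup>2 / 2) * sqrt (2 * pi * \<eta>)) * (\<integral>\<^sup>+u. ennreal (normal_density m (sqrt \<eta>) u) \<partial>lborel)"
    by (rule nn_integral_cmult) simp
  also have "(\<integral>\<^sup>+u. ennreal (normal_density m (sqrt \<eta>) u) \<partial>lborel) = 1"
    using assms by (subst nn_integral_eq_integral) (auto intro!: integrable_normal_density integral_normal_density)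
  finally show ?thesis by simp
qed

lemma ptw:
  fixes \<tau> \<eta> d :: real
  assumes "\<eta> > 0"
  shows "ennreal (exp (- (d - \<tau>)\<^sup>2 / (2 * \<eta>))) \<le>
    (\<integral>\<^sup>+s. ennreal ((s - \<tau>) / \<eta> * exp (- (s - \<tau>)\<^sup>2 / (2 * \<eta>))) * indicator {\<tau>..} s * indicator {d..} s \<partial>lborel)"
proof -
  have "(\<integral>\<^sup>+s. ennreal ((s - \<tau>) / \<eta> * exp (- (s - \<tau>)\<^sup>2 / (2 * \<eta>))) * indicator {\<tau>..} s * indicator {d..} s \<partial>lborel)
    = (\<integral>\<^sup>+s. ennreal ((s - \<tau>) / \<eta> * exp (- (s - \<tau>)\<^sup>2 / (2 * \<eta>))) * indicator {max d \<tau>..} s \<partial>lborel)"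
    by (rule nn_integral_cong) (auto split: split_indicator)
  also have "\<dots> = ennreal (exp (- (max d \<tau> - \<tau>)\<^sup>2 / (2 * \<eta>)))"
    by (rule tail[OF assms]) simp
  finally have eq: "(\<integral>\<^sup>+s. ennreal ((s - \<tau>) / \<eta> * exp (- (s - \<tau>)\<^sup>2 / (2 * \<eta>))) * indicator {\<tau>..} s * indicator {d..} s \<partial>lborel) = ennreal (exp (- (max d \<tau> - \<tau>)\<^sup>2 / (2 * \<eta>)))" .
  have "exp (- (d - \<tau>)\<^sup>2 / (2 * \<eta>)) \<le> exp (- (max d \<tau> - \<tau>)\<^sup>2 / (2 * \<eta>))"
  proof (cases "d \<le> \<tau>")
    case True
    then show ?thesis using assms by (simp add: max_def divide_nonneg_pos)
  next
    case False
    then show ?thesis by (simp add: max_def)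
  qed
  then show ?thesis unfolding eq by (simp add: ennreal_leI)
qed


lemma Ebound:
  fixes \<tau> \<eta> C :: real
  assumes "\<eta> > 0" "C \<ge> 0"
  shows "(\<integral>\<^sup>+s. ennreal ((s - \<tau>) / \<eta> * exp (- (s - \<tau>)\<^sup>2 / (2 * \<eta>))) * indicator {\<tau>..} s * ennreal (exp (s * C)) \<partial>lborel)
     \<le> ennreal (exp (\<tau> * C) * (C * sqrt (2 * pi * \<eta>) * exp (\<eta> * C\<^sup>2 / 2) + 1))"
proof -
  define f0 where "f0 s = (s - \<tau>) / \<eta> * exp (- (s - \<tau>)\<^sup>2 / (2 * \<eta>))" for s
  have f0m[measurable]: "f0 \<in> borel_measurable borel" unfolding f0_def
    by (intro borel_measurable_continuous_onI continuous_intros) (use assms(1) in auto)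
  define k where "k s = ennreal (f0 s) * indicator {\<tau>..} s" for s
  have km[measurable]: "k \<in> borel_measurable borel" unfolding k_def by measurable
  define B where "B s u = k s * (ennreal (C * exp (C * u)) * indicator {\<tau>..} u * indicator {u..} s)" for s u :: real
  have Bm[measurable]: "case_prod B \<in> borel_measurable (lborel \<Otimes>\<^sub>M lborel)"
    unfolding B_def by measurable (unfold atLeast_iff, measurable)
  have step1: "k s * ennreal (exp (s * C)) = k s * ennreal (exp (\<tau> * C)) + (\<integral>\<^sup>+u. B s u \<partial>lborel)" for s
  proof (cases "\<tau> \<le> s")
    case False
    then show ?thesis by (simp add: k_def B_def)
  next
    case True
    have "(\<integral>\<^sup>+u. B s u \<partial>lborel) = k s * (\<integral>\<^sup>+u. ennreal (C * exp (C * u)) * indicator {\<tau>..s} u \<partial>lborel)"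
      unfolding B_def
      by (subst nn_integral_cmult[symmetric]) (auto intro!: nn_integral_cong split: split_indicator)
    also have "(\<integral>\<^sup>+u. ennreal (C * exp (C * u)) * indicator {\<tau>..s} u \<partial>lborel) = ennreal (exp (C * s) - exp (C * \<tau>))"
    proof (rule nn_integral_FTC_Icc)
      show "(\<lambda>u. C * exp (C * u)) \<in> borel_measurable borel"
        by (intro borel_measurable_continuous_onI continuous_intros)
      fix x
      show "((\<lambda>u. exp (C * u)) has_real_derivative C * exp (C * x)) (at x)"
        by (auto intro!: derivative_eq_intros)
      show "0 \<le> C * exp (C * x)" using assms(2) by simp
    qed (use True in simp)
    finally have "(\<integral>\<^sup>+u. B s u \<partial>lborel) = k s * ennreal (exp (C * s) - exp (C * \<tau>))" .
    moreover have "exp (C * \<tau>) \<le> exp (C * s)" using True assms(2) by (simp add: mult_left_mono)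
    ultimately show ?thesis
      by (simp add: distrib_left[symmetric] ennreal_plus[symmetric] mult.commute del: ennreal_plus)
  qed
  have "(\<integral>\<^sup>+s. ennreal (f0 s) * indicator {\<tau>..} s * ennreal (exp (s * C)) \<partial>lborel)
      = (\<integral>\<^sup>+s. k s * ennreal (exp (\<tau> * C)) + (\<integral>\<^sup>+u. B s u \<partial>lborel) \<partial>lborel)"
    using step1 by (simp add: k_def)
  also have "\<dots> = (\<integral>\<^sup>+s. k s * ennreal (exp (\<tau> * C)) \<partial>lborel) + (\<integral>\<^sup>+s. (\<integral>\<^sup>+u. B s u \<partial>lborel) \<partial>lborel)"
    by (rule nn_integral_add) measurable
  also have "(\<integral>\<^sup>+s. k s * ennreal (exp (\<tau> * C)) \<partial>lborel) = ennreal (exp (\<tau> * C))"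
  proof -
    have "(\<integral>\<^sup>+s. k s * ennreal (exp (\<tau> * C)) \<partial>lborel) = (\<integral>\<^sup>+s. k s \<partial>lborel) * ennreal (exp (\<tau> * C))"
      by (rule nn_integral_multc) measurable
    also have "(\<integral>\<^sup>+s. k s \<partial>lborel) = 1"
      using tail[OF assms(1), of \<tau> \<tau>] by (simp add: k_def f0_def)
    finally show ?thesis by simp
  qed
  also have "(\<integral>\<^sup>+s. (\<integral>\<^sup>+u. B s u \<partial>lborel) \<partial>lborel) = (\<integral>\<^sup>+u. (\<integral>\<^sup>+s. B s u \<partial>lborel) \<partial>lborel)"
    by (rule lborel_pair.Fubini'[symmetric]) (rule Bm)
  also have "\<dots> \<le> (\<integral>\<^sup>+u. ennreal C * ennreal (exp (C * u) * exp (- (u - \<tau>)\<^sup>2 / (2 * \<eta>))) \<partial>lborel)"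
  proof (rule nn_integral_mono)
    fix u :: real
    show "(\<integral>\<^sup>+s. B s u \<partial>lborel) \<le> ennreal C * ennreal (exp (C * u) * exp (- (u - \<tau>)\<^sup>2 / (2 * \<eta>)))"
    proof (cases "\<tau> \<le> u")
      case False
      then show ?thesis by (simp add: B_def)
    next
      case True
      have "(\<integral>\<^sup>+s. B s u \<partial>lborel) = ennreal (C * exp (C * u)) * (\<integral>\<^sup>+s. ennreal (f0 s) * indicator {u..} s \<partial>lborel)"
        unfolding B_def k_def using True
        by (subst nn_integral_cmult[symmetric]) (auto intro!: nn_integral_cong split: split_indicator simp: mult_ac)
      also have "(\<integral>\<^sup>+s. ennreal (f0 s) * indicator {u..} s \<partial>lborel) = ennreal (exp (- (u - \<tau>)\<^sup>2 / (2 * \<eta>)))"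
        unfolding f0_def by (rule tail[OF assms(1) True])
      finally show ?thesis using assms(2) by (simp add: ennreal_mult[symmetric] mult.assoc)
    qed
  qed
  also have "\<dots> = ennreal C * (\<integral>\<^sup>+u. ennreal (exp (C * u) * exp (- (u - \<tau>)\<^sup>2 / (2 * \<eta>))) \<partial>lborel)"
  proof -
    have em: "(\<lambda>u. exp (C * u) * exp (- (u - \<tau>)\<^sup>2 / (2 * \<eta>))) \<in> borel_measurable borel"
      by (intro borel_measurable_continuous_onI continuous_intros) (use assms(1) in auto)
    show ?thesis by (rule nn_integral_cmult) (use em in simp)
  qed
  also have "\<dots> = ennreal C * ennreal (exp (C * \<tau> + \<eta> * C\<^sup>2 / 2) * sqrt (2 * pi * \<eta>))"
    using gauss[OF assms(1), of C \<tau>] by (simp only:)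
  finally have fin: "(\<integral>\<^sup>+s. ennreal (f0 s) * indicator {\<tau>..} s * ennreal (exp (s * C)) \<partial>lborel)
      \<le> ennreal (exp (\<tau> * C)) + ennreal C * ennreal (exp (C * \<tau> + \<eta> * C\<^sup>2 / 2) * sqrt (2 * pi * \<eta>))"
    by (simp add: add_left_mono)
  have "exp (\<tau> * C) + C * (exp (C * \<tau> + \<eta> * C\<^sup>2 / 2) * sqrt (2 * pi * \<eta>))
      = exp (\<tau> * C) * (C * sqrt (2 * pi * \<eta>) * exp (\<eta> * C\<^sup>2 / 2) + 1)"
    by (simp add: exp_add algebra_simps)
  moreover have "ennreal (exp (\<tau> * C)) + ennreal C * ennreal (exp (C * \<tau> + \<eta> * C\<^sup>2 / 2) * sqrt (2 * pi * \<eta>))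
     = ennreal (exp (\<tau> * C) + C * (exp (C * \<tau> + \<eta> * C\<^sup>2 / 2) * sqrt (2 * pi * \<eta>)))"
    using assms by (simp add: ennreal_mult[symmetric] ennreal_plus[symmetric] del: ennreal_plus)
  ultimately show ?thesis using fin unfolding f0_def by simp
qed


theorem lemma2:
  fixes K :: "(real ^ 'd) set" and f :: "real ^ 'd \<Rightarrow> real"
    and R L a \<eta> \<tau> :: real
  assumes "K \<noteq> {}" and "closed K" and "convex K"
    and "cball 0 1 \<subseteq> K" and "K \<subseteq> cball 0 R"
    and "convex_on K f" and "L-lipschitz_on K f" and "L > 0"
    and "a > 0" and "\<eta> > 0" and "\<tau> > 0"
  defines "Q \<equiv> {(x, t). x \<in> K \<and> f x \<le> a * t}"
    and "C \<equiv> sqrt (a\<^sup>2 + L\<^sup>2) + L * R + real CARD('d)"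
  shows "(\<integral>\<^sup>+ w. ennreal (exp (- a * snd w) *
             exp (- (infdist w Q - \<tau>)\<^sup>2 / (2 * \<eta>))) \<partial>lborel)
         \<le> (\<integral>\<^sup>+ w. ennreal (exp (- a * snd w)) * indicator Q w \<partial>lborel)
            * ennreal (exp (\<tau> * C) *
                (C * sqrt (2 * pi * \<eta>) * exp (\<eta> * C\<^sup>2 / 2) + 1))"
proof -
  define MQ where "MQ = (\<integral>\<^sup>+ w. ennreal (exp (- a * snd w)) * indicator Q w \<partial>lborel)"
  define f0 where "f0 s = (s - \<tau>) / \<eta> * exp (- (s - \<tau>)\<^sup>2 / (2 * \<eta>))" for s
  have f0m[measurable]: "f0 \<in> borel_measurable borel" unfolding f0_def
    by (intro borel_measurable_continuous_onI continuous_intros) (use assms(10) in auto)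
  define k where "k s = ennreal (f0 s) * indicator {\<tau>..} s" for s
  have km[measurable]: "k \<in> borel_measurable borel" unfolding k_def by measurable
  have R0: "R \<ge> 0" using assms(4,5) by (auto simp: subset_iff) (metis centre_in_cball mem_cball_0 norm_zero zero_le_one)
  have C0: "C \<ge> 0" unfolding C_def using R0 assms(8) by simp
  have em[measurable]: "(\<lambda>w::(real ^ 'd) \<times> real. exp (- a * snd w)) \<in> borel_measurable borel"
    by (intro borel_measurable_continuous_onI continuous_intros)
  have dm[measurable]: "(\<lambda>w::(real ^ 'd) \<times> real. infdist w Q) \<in> borel_measurable borel"
    by (intro borel_measurable_continuous_onI continuous_intros)
  define H where "H w s = ennreal (exp (- a * snd w)) * k s * indicator {infdist w Q..} s"
    for w :: "(real ^ 'd) \<times> real" and s :: real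
  have Hm: "case_prod H \<in> borel_measurable (lborel \<Otimes>\<^sub>M lborel)"
    unfolding H_def by measurable (unfold atLeast_iff, measurable)
  have "(\<integral>\<^sup>+ w. ennreal (exp (- a * snd w) * exp (- (infdist w Q - \<tau>)\<^sup>2 / (2 * \<eta>))) \<partial>lborel)
     \<le> (\<integral>\<^sup>+ w. ennreal (exp (- a * snd w)) * (\<integral>\<^sup>+s. k s * indicator {infdist w Q..} s \<partial>lborel) \<partial>lborel)"
  proof (rule nn_integral_mono)
    fix w :: "(real ^ 'd) \<times> real"
    show "ennreal (exp (- a * snd w) * exp (- (infdist w Q - \<tau>)\<^sup>2 / (2 * \<eta>)))
       \<le> ennreal (exp (- a * snd w)) * (\<integral>\<^sup>+s. k s * indicator {infdist w Q..} s \<partial>lborel)"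
    proof -
      have e: "ennreal (exp (- a * snd w) * exp (- (infdist w Q - \<tau>)\<^sup>2 / (2 * \<eta>)))
        = ennreal (exp (- a * snd w)) * ennreal (exp (- (infdist w Q - \<tau>)\<^sup>2 / (2 * \<eta>)))"
        by (rule ennreal_mult) auto
      show ?thesis
        by (unfold e k_def f0_def, rule mult_left_mono[OF ptw[OF assms(10)]]) simp
    qed
  qed
  also have "\<dots> = (\<integral>\<^sup>+ w. \<integral>\<^sup>+s. H w s \<partial>lborel \<partial>lborel)"
  proof (rule nn_integral_cong)
    fix w :: "(real ^ 'd) \<times> real"
    have m: "(\<lambda>s. k s * indicator {infdist w Q..} s) \<in> borel_measurable lborel" by measurable
    show "ennreal (exp (- a * snd w)) * (\<integral>\<^sup>+s. k s * indicator {infdist w Q..} s \<partial>lborel) = (\<integral>\<^sup>+s. H w s \<partial>lborel)"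
      unfolding H_def by (subst nn_integral_cmult[symmetric, OF m]) (simp add: mult.assoc)
  qed
  also have "\<dots> = (\<integral>\<^sup>+s. \<integral>\<^sup>+ w. H w s \<partial>lborel \<partial>lborel)"
    by (rule pair_sigma_finite.Fubini'[symmetric]) (unfold_locales, rule Hm)
  also have "\<dots> = (\<integral>\<^sup>+s. k s * (\<integral>\<^sup>+w. ennreal (exp (- a * snd w)) * indicator {w. infdist w Q \<le> s} w \<partial>lborel) \<partial>lborel)"
  proof (rule nn_integral_cong)
    fix s :: real
    have "(\<integral>\<^sup>+ w. H w s \<partial>lborel) = (\<integral>\<^sup>+ w. k s * (ennreal (exp (- a * snd w)) * indicator {w. infdist w Q \<le> s} w) \<partial>lborel)"
      unfolding H_def by (rule nn_integral_cong) (auto split: split_indicator simp: mult.commute)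
    also have "\<dots> = k s * (\<integral>\<^sup>+w. ennreal (exp (- a * snd w)) * indicator {w. infdist w Q \<le> s} w \<partial>lborel)"
      by (rule nn_integral_cmult) measurable
    finally show "(\<integral>\<^sup>+ w. H w s \<partial>lborel) = \<dots>" .
  qed
  also have "\<dots> \<le> (\<integral>\<^sup>+s. k s * ennreal (exp (s * C)) * MQ \<partial>lborel)"
  proof (rule nn_integral_mono)
    fix s :: real
    show "k s * (\<integral>\<^sup>+w. ennreal (exp (- a * snd w)) * indicator {w. infdist w Q \<le> s} w \<partial>lborel)
       \<le> k s * ennreal (exp (s * C)) * MQ"
    proof (cases "\<tau> \<le> s")
      case False
      then show ?thesis by (simp add: k_def)
    next
      case True
      then have "s \<ge> 0" using assms(11) by simp
      from growth[OF assms(1,2,3,4,5,7,9) this]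
      have "(\<integral>\<^sup>+w. ennreal (exp (- a * snd w)) * indicator {w. infdist w Q \<le> s} w \<partial>lborel)
         \<le> ennreal (exp (s * C)) * MQ"
        unfolding MQ_def Q_def C_def by (simp add: add.assoc)
      then show ?thesis by (simp add: mult.assoc mult_left_mono)
    qed
  qed
  also have "\<dots> = (\<integral>\<^sup>+s. k s * ennreal (exp (s * C)) \<partial>lborel) * MQ"
    by (rule nn_integral_multc) measurable
  also have "\<dots> \<le> ennreal (exp (\<tau> * C) * (C * sqrt (2 * pi * \<eta>) * exp (\<eta> * C\<^sup>2 / 2) + 1)) * MQ"
    by (rule mult_right_mono) (use Ebound[OF assms(10) C0, of \<tau>] in \<open>simp_all add: k_def f0_def\<close>)
  finally show ?thesis unfolding MQ_def by (simp add: mult.commute)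
qed
end
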